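(* Let $\mathcal{B}$ be a natural correlation basis and $X,Y$ continuous random variables. If $X$ and $Y$ are comonotonic then $\rho^B_{jk}(X,Y)=\delta_{jk}$ for all $j,k\in\mathbb{N}$. If $X$ and $Y$ are countermonotonic then $\rho^B_{jk}(X,Y)=(-1)^j\delta_{jk}$ for all $j,k\in\mathbb{N}$.
   Context: A correlation basis is a complete orthonormal system $\{B_j:j\in\mathbb{N}_0\}$ of $\mathcal{L}^2([0,1])$ with $B_0\equiv1$. It is regular if each $B_j$, $j\ge1$, is (a) piecewise continuous and strictly monotonic (there is a finite partition of $[0,1]$ into intervals on whose interiors $B_j$ is continuous and strictly monotonic) and (b) regular (continuous on $[0,1]$, continuously differentiable on $(0,1)$ with bounded derivative, and $B_j'(u)=0$ iff $u$ is a turning point). It is natural if it is regular and for every $j\in\mathbb{N}$: (i) $B_j'(u)>0$ on some interval $(1-\epsilon_j,1)$, $\epsilon_j>0$; (ii) $B_j$ has exactly $j-1$ turning points; (iii) $B_j(1-u)=(-1)^jB_j(u)$ for all $u\in[0,1]$. The basis correlation is $\rho^B_{jk}(X,Y)=\rho(B_j(F_X(X)),B_k(F_Y(Y)))$ with $\rho$ Pearson correlation; $\delta_{jk}$ is the Kronecker delta. *)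

theory Defs
  imports "HOL-Probability.Probability"
begin

text \<open>Completeness (totality) is stated as: the only square-integrable
  function orthogonal to every B j is zero almost everywhere on [0,1].\<close>

definition sq_integrable01 :: "(real \<Rightarrow> real) \<Rightarrow> bool" where
  "sq_integrable01 f \<longleftrightarrow> f \<in> borel_measurable lborel \<and>
     set_integrable lborel {0..1} (\<lambda>u. (f u)\<^sup>2)"

definition correlation_basis :: "(nat \<Rightarrow> real \<Rightarrow> real) \<Rightarrow> bool" where
  "correlation_basis B \<longleftrightarrow>
     (\<forall>j. sq_integrable01 (B j)) \<and>
     (\<forall>j k. (LINT u:{0..1}|lborel. B j u * B k u) = (if j = k then 1 else 0)) \<and>
     (\<forall>f. sq_integrable01 f \<longrightarrow> (\<forall>j. (LINT u:{0..1}|lborel. f u * B j u) = 0)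
          \<longrightarrow> (AE u in lborel. u \<in> {0..1} \<longrightarrow> f u = 0)) \<and>
     (\<forall>u\<in>{0..1}. B 0 u = 1)"

definition turning_point :: "(real \<Rightarrow> real) \<Rightarrow> real \<Rightarrow> bool" where
  "turning_point b u \<longleftrightarrow> u \<in> {0<..<1} \<and> (\<exists>e>0.
     (strict_mono_on {u-e..u} b \<and> strict_antimono_on {u..u+e} b) \<or>
     (strict_antimono_on {u-e..u} b \<and> strict_mono_on {u..u+e} b))"

definition pw_cont_strict_mono :: "(real \<Rightarrow> real) \<Rightarrow> bool" where
  "pw_cont_strict_mono b \<longleftrightarrow> (\<exists>m::nat. \<exists>t::nat \<Rightarrow> real. m \<ge> 1 \<and> t 0 = 0 \<and> t m = 1 \<and>
     (\<forall>i<m. t i < t (Suc i) \<and> continuous_on {t i<..<t (Suc i)} b \<and>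
        (strict_mono_on {t i<..<t (Suc i)} b \<or> strict_antimono_on {t i<..<t (Suc i)} b)))"

definition regular_fun :: "(real \<Rightarrow> real) \<Rightarrow> bool" where
  "regular_fun b \<longleftrightarrow> continuous_on {0..1} b \<and>
     (\<forall>u\<in>{0<..<1}. b differentiable (at u)) \<and>
     continuous_on {0<..<1} (deriv b) \<and>
     bounded (deriv b ` {0<..<1}) \<and>
     (\<forall>u\<in>{0<..<1}. deriv b u = 0 \<longleftrightarrow> turning_point b u)"

definition regular_basis :: "(nat \<Rightarrow> real \<Rightarrow> real) \<Rightarrow> bool" where
  "regular_basis B \<longleftrightarrow> correlation_basis B \<and>
     (\<forall>j\<ge>1. pw_cont_strict_mono (B j) \<and> regular_fun (B j))"

definition natural_basis :: "(nat \<Rightarrow> real \<Rightarrow> real) \<Rightarrow> bool" where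
  "natural_basis B \<longleftrightarrow> regular_basis B \<and>
     (\<forall>j\<ge>1. (\<exists>e>0. \<forall>u\<in>{1-e<..<1}. deriv (B j) u > 0) \<and>
        finite {u. turning_point (B j) u} \<and> card {u. turning_point (B j) u} = j - 1 \<and>
        (\<forall>u\<in>{0..1}. B j (1 - u) = (-1) ^ j * B j u))"

definition distr_fun :: "'a measure \<Rightarrow> ('a \<Rightarrow> real) \<Rightarrow> real \<Rightarrow> real" where
  "distr_fun M X = cdf (distr M borel X)"

definition continuous_rv :: "'a measure \<Rightarrow> ('a \<Rightarrow> real) \<Rightarrow> bool" where
  "continuous_rv M X \<longleftrightarrow> X \<in> borel_measurable M \<and> continuous_on UNIV (distr_fun M X)"

definition comonotonic :: "'a measure \<Rightarrow> ('a \<Rightarrow> real) \<Rightarrow> ('a \<Rightarrow> real) \<Rightarrow> bool" where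
  "comonotonic M X Y \<longleftrightarrow> (\<exists>A::(real \<times> real) set.
     (\<forall>(x1,y1)\<in>A. \<forall>(x2,y2)\<in>A. (x1 - x2) * (y1 - y2) \<ge> 0) \<and>
     (AE \<omega> in M. (X \<omega>, Y \<omega>) \<in> A))"

definition countermonotonic :: "'a measure \<Rightarrow> ('a \<Rightarrow> real) \<Rightarrow> ('a \<Rightarrow> real) \<Rightarrow> bool" where
  "countermonotonic M X Y \<longleftrightarrow> (\<exists>A::(real \<times> real) set.
     (\<forall>(x1,y1)\<in>A. \<forall>(x2,y2)\<in>A. (x1 - x2) * (y1 - y2) \<le> 0) \<and>
     (AE \<omega> in M. (X \<omega>, Y \<omega>) \<in> A))"

definition pearson :: "'a measure \<Rightarrow> ('a \<Rightarrow> real) \<Rightarrow> ('a \<Rightarrow> real) \<Rightarrow> real" where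
  "pearson M U V =
     (let EU = integral\<^sup>L M U; EV = integral\<^sup>L M V in
      (integral\<^sup>L M (\<lambda>\<omega>. (U \<omega> - EU) * (V \<omega> - EV))) /
      sqrt ((integral\<^sup>L M (\<lambda>\<omega>. (U \<omega> - EU)\<^sup>2)) * (integral\<^sup>L M (\<lambda>\<omega>. (V \<omega> - EV)\<^sup>2))))"

definition basis_corr :: "(nat \<Rightarrow> real \<Rightarrow> real) \<Rightarrow> 'a measure \<Rightarrow> nat \<Rightarrow> nat \<Rightarrow>
    ('a \<Rightarrow> real) \<Rightarrow> ('a \<Rightarrow> real) \<Rightarrow> real" where
  "basis_corr B M j k X Y =
     pearson M (\<lambda>\<omega>. B j (distr_fun M X (X \<omega>))) (\<lambda>\<omega>. B k (distr_fun M Y (Y \<omega>)))"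

end

theory Submission
  imports Defs
begin

lemma distr_fun_eq:
  assumes "prob_space M" "X \<in> borel_measurable M"
  shows "distr_fun M X x = measure M {\<omega>\<in>space M. X \<omega> \<le> x}"
  unfolding distr_fun_def cdf_def using assms
  by (subst measure_distr) (auto simp: vimage_def Int_def conj_commute)

lemma unif_cdf:
  assumes P: "prob_space M" and C: "continuous_rv M X" and q: "0 < q" "q < 1"
  shows "measure M {\<omega>\<in>space M. distr_fun M X (X \<omega>) \<le> q} = q"
proof -
  interpret prob_space M by fact
  have Xm: "X \<in> borel_measurable M" and Fc: "continuous_on UNIV (distr_fun M X)"
    using C by (auto simp: continuous_rv_def)
  define F where "F = distr_fun M X"
  interpret D: real_distribution "distr M borel X" using Xm by simp
  have Fcdf: "F = cdf (distr M borel X)" by (simp add: F_def distr_fun_def)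
  have mono: "\<And>x y. x \<le> y \<Longrightarrow> F x \<le> F y" unfolding Fcdf by (rule D.cdf_nondecreasing)
  have "eventually (\<lambda>x. F x < q) at_bot"
    using order_tendstoD(2)[OF D.cdf_lim_at_bot q(1)] unfolding Fcdf .
  then obtain a where a: "F a < q" by (auto simp: eventually_at_bot_linorder)
  have "eventually (\<lambda>x. F x > q) at_top"
    using order_tendstoD(1)[OF D.cdf_lim_at_top_prob q(2)] unfolding Fcdf .
  then obtain b where b: "F b > q" by (auto simp: eventually_at_top_linorder)
  define S where "S = {x. F x \<le> q}"
  have Fc': "continuous_on UNIV F" using Fc by (simp add: F_def)
  have clS: "closed S" unfolding S_def
    by (rule closed_Collect_le[OF Fc' continuous_on_const, simplified]) 
  have Sb: "\<And>x. x \<in> S \<Longrightarrow> x \<le> b"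
    using mono b unfolding S_def by (metis linorder_not_le mem_Collect_eq not_less order.strict_trans2 less_imp_le)
  have bdd: "bdd_above S" using Sb by (auto simp: bdd_above_def)
  have aS: "a \<in> S" using a by (simp add: S_def)
  define x0 where "x0 = Sup S"
  have x0S: "x0 \<in> S" unfolding x0_def using closed_contains_Sup[OF _ bdd clS] aS by blast
  have x0b: "x0 \<le> b" using Sb x0S by blast
  have "\<exists>c. x0 \<le> c \<and> c \<le> b \<and> F c = q"
    by (rule IVT') (use x0S b x0b continuous_on_subset[OF Fc'] in \<open>auto simp: S_def\<close>)
  then obtain c where c: "x0 \<le> c" "c \<le> b" "F c = q" by blast
  have "c \<le> x0" unfolding x0_def using c(3) bdd by (intro cSup_upper) (auto simp: S_def)
  with c have Fx0: "F x0 = q" by simp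
  have "{\<omega>\<in>space M. F (X \<omega>) \<le> q} = {\<omega>\<in>space M. X \<omega> \<le> x0}"
  proof (intro Collect_cong conj_cong refl iffI)
    fix \<omega> assume "F (X \<omega>) \<le> q" then show "X \<omega> \<le> x0"
      unfolding x0_def using bdd by (intro cSup_upper) (auto simp: S_def)
  next
    fix \<omega> assume "X \<omega> \<le> x0" then show "F (X \<omega>) \<le> q" using mono Fx0 by metis
  qed
  then show ?thesis using distr_fun_eq[OF P Xm, of x0] Fx0 by (simp add: F_def)
qed

lemma U_meas:
  assumes "continuous_rv M X"
  shows "(\<lambda>\<omega>. distr_fun M X (X \<omega>)) \<in> borel_measurable M"
proof -
  have "distr_fun M X \<in> borel_measurable borel"
    using assms by (intro borel_measurable_continuous_onI) (auto simp: continuous_rv_def)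
  then show ?thesis using assms by (auto simp: continuous_rv_def)
qed

lemma U_bounds:
  assumes "prob_space M" "continuous_rv M X"
  shows "0 \<le> distr_fun M X x \<and> distr_fun M X x \<le> 1"
proof -
  interpret prob_space M by fact
  interpret D: real_distribution "distr M borel X" using assms by (simp add: continuous_rv_def)
  show ?thesis unfolding distr_fun_def using D.cdf_bounded_prob D.cdf_nonneg by auto
qed

lemma unif_le:
  assumes P: "prob_space M" and C: "continuous_rv M X" and t: "0 \<le> t" "t \<le> 1"
  shows "measure M {\<omega>\<in>space M. distr_fun M X (X \<omega>) \<le> t} = t"
proof -
  interpret prob_space M by fact
  have Um: "(\<lambda>\<omega>. distr_fun M X (X \<omega>)) \<in> borel_measurable M" using U_meas[OF C] .
  consider "t = 0" | "0 < t \<and> t < 1" | "t = 1" using t by linarith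
  then show ?thesis
  proof cases
    case 2 then show ?thesis using unif_cdf[OF P C] by auto
  next
    case 3
    then have "{\<omega>\<in>space M. distr_fun M X (X \<omega>) \<le> t} = space M" using U_bounds[OF P C] by auto
    then show ?thesis using 3 prob_space by simp
  next
    case 1
    define p where "p = measure M {\<omega>\<in>space M. distr_fun M X (X \<omega>) \<le> 0}"
    have "p \<le> 0"
    proof (rule ccontr)
      assume "\<not> p \<le> 0"
      define e where "e = min (p/2) (1/2)"
      have e: "0 < e" "e < 1" "e < p" using \<open>\<not> p \<le> 0\<close> by (auto simp: e_def)
      have "p \<le> measure M {\<omega>\<in>space M. distr_fun M X (X \<omega>) \<le> e}"
        unfolding p_def using Um e by (intro finite_measure_mono) auto
      also have "\<dots> = e" using unif_cdf[OF P C e(1,2)] .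
      finally show False using e by simp
    qed
    then show ?thesis using 1 measure_nonneg p_def by (metis order.antisym)
  qed
qed

lemma unif_lt:
  assumes P: "prob_space M" and C: "continuous_rv M X" and t: "0 < t" "t < 1"
  shows "measure M {\<omega>\<in>space M. distr_fun M X (X \<omega>) < t} = t"
proof -
  interpret prob_space M by fact
  have Um: "(\<lambda>\<omega>. distr_fun M X (X \<omega>)) \<in> borel_measurable M" using U_meas[OF C] .
  define p where "p = measure M {\<omega>\<in>space M. distr_fun M X (X \<omega>) < t}"
  have "p \<le> measure M {\<omega>\<in>space M. distr_fun M X (X \<omega>) \<le> t}"
    unfolding p_def using Um by (intro finite_measure_mono) auto
  then have "p \<le> t" using unif_le[OF P C, of t] t by simp
  moreover have "p \<ge> t"
  proof (rule ccontr)
    assume "\<not> p \<ge> t"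
    define e where "e = (p + t) / 2"
    have e: "0 < e" "e < t" "p < e" proof -
      have "0 \<le> p" unfolding p_def by (rule measure_nonneg)
      then show "0 < e" "e < t" "p < e" using \<open>\<not> p \<ge> t\<close> t unfolding e_def by auto
    qed
    have "e = measure M {\<omega>\<in>space M. distr_fun M X (X \<omega>) \<le> e}" using unif_le[OF P C, of e] e t by simp
    also have "\<dots> \<le> p" unfolding p_def using Um e by (intro finite_measure_mono) auto
    finally show False using e by simp
  qed
  ultimately show ?thesis by (simp add: p_def)
qed

lemma unif_integral:
  assumes P: "prob_space M" and C: "continuous_rv M X" and g: "(g::real\<Rightarrow>real) \<in> borel_measurable borel"
  shows "(\<integral>\<omega>. g (distr_fun M X (X \<omega>)) \<partial>M) = (LINT u:{0..1}|lborel. g u)"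
proof -
  interpret prob_space M by fact
  have Um: "(\<lambda>\<omega>. distr_fun M X (X \<omega>)) \<in> borel_measurable M" using U_meas[OF C] .
  have D: "distributed M lborel (\<lambda>\<omega>. distr_fun M X (X \<omega>)) (\<lambda>x. indicator {0..1} x / measure lborel {0..1::real})"
    by (rule uniform_distrI_borel_atLeastAtMost[OF Um]) (use unif_le[OF P C] in auto)
  have "(\<integral>\<omega>. g (distr_fun M X (X \<omega>)) \<partial>M) = (\<integral>x. indicator {0..1} x / measure lborel {0..1::real} * g x \<partial>lborel)"
    by (rule distributed_integral[OF D, symmetric]) (use g in auto)
  also have "\<dots> = (LINT u:{0..1}|lborel. g u)"
    unfolding set_lebesgue_integral_def by simp
  finally show ?thesis .
qed

lemma half_null:
  assumes P: "prob_space M" and Um: "U \<in> borel_measurable M" and Wm: "W \<in> borel_measurable M"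
    and eq: "measure M {\<omega>\<in>space M. U \<omega> \<le> q} = measure M {\<omega>\<in>space M. W \<omega> \<le> (q::real)}"
    and ae: "AE \<omega> in M. \<not> (U \<omega> \<le> q \<and> q < W \<omega>)"
  shows "AE \<omega> in M. \<not> (W \<omega> \<le> q \<and> q < U \<omega>)"
proof -
  interpret prob_space M by fact
  define A where "A = {\<omega>\<in>space M. U \<omega> \<le> q}"
  define B where "B = {\<omega>\<in>space M. W \<omega> \<le> q}"
  have As: "A \<in> sets M" and Bs: "B \<in> sets M" using Um Wm by (auto simp: A_def B_def)
  have "A - B = {\<omega>\<in>space M. U \<omega> \<le> q \<and> q < W \<omega>}" by (auto simp: A_def B_def)
  then have "prob (A - B) = 0" using prob_eq_0_AE[OF ae] by simp
  then have "prob A = prob (A \<inter> B)" using finite_measure_Diff'[OF As Bs] by simp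
  then have "prob (B - A) = 0" using finite_measure_Diff'[OF Bs As] eq
    by (simp add: A_def B_def Int_commute)
  then have "AE \<omega> in M. \<omega> \<notin> B - A" using prob_eq_0[of "B - A"] As Bs by auto
  moreover have "AE \<omega> in M. \<omega> \<in> space M" by simp
  ultimately show ?thesis by eventually_elim (auto simp: A_def B_def)
qed

lemma ae_eq_of_mono:
  assumes P: "prob_space M" and Um: "U \<in> borel_measurable M" and Wm: "W \<in> borel_measurable M"
    and U01: "\<And>\<omega>. 0 \<le> U \<omega> \<and> U \<omega> \<le> 1" and W01: "\<And>\<omega>. \<omega> \<in> space M \<Longrightarrow> 0 \<le> W \<omega> \<and> W \<omega> \<le> 1"
    and eq: "\<And>q. 0 < q \<Longrightarrow> q < 1 \<Longrightarrow>
       measure M {\<omega>\<in>space M. U \<omega> \<le> q} = measure M {\<omega>\<in>space M. W \<omega> \<le> (q::real)}"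
    and N: "N \<in> null_sets M"
    and mono: "\<And>\<omega>1 \<omega>2. \<omega>1 \<in> space M - N \<Longrightarrow> \<omega>2 \<in> space M - N \<Longrightarrow> U \<omega>1 < U \<omega>2 \<Longrightarrow> W \<omega>1 \<le> W \<omega>2"
  shows "AE \<omega> in M. U \<omega> = W \<omega>"
proof -
  have each: "AE \<omega> in M. \<not> (U \<omega> \<le> q \<and> q < W \<omega>) \<and> \<not> (W \<omega> \<le> q \<and> q < U \<omega>)"
    if q: "0 < q" "q < 1" for q
  proof (cases "\<exists>\<omega>1\<in>space M - N. U \<omega>1 \<le> q \<and> q < W \<omega>1")
    case True
    then obtain \<omega>1 where w1: "\<omega>1 \<in> space M - N" "U \<omega>1 \<le> q" "q < W \<omega>1" by blast
    have "AE \<omega> in M. \<not> (W \<omega> \<le> q \<and> q < U \<omega>)"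
    proof (rule AE_I'[OF N], rule subsetI)
      fix \<omega> assume "\<omega> \<in> {\<omega> \<in> space M. \<not> \<not> (W \<omega> \<le> q \<and> q < U \<omega>)}"
      then have "\<omega> \<in> space M" "W \<omega> \<le> q" "q < U \<omega>" by auto
      show "\<omega> \<in> N"
      proof (rule ccontr)
        assume "\<omega> \<notin> N"
        then have "W \<omega>1 \<le> W \<omega>" using mono[of \<omega>1 \<omega>] w1 \<open>\<omega> \<in> space M\<close> \<open>q < U \<omega>\<close> by auto
        then show False using w1 \<open>W \<omega> \<le> q\<close> by simp
      qed
    qed
    moreover have "AE \<omega> in M. \<not> (U \<omega> \<le> q \<and> q < W \<omega>)"
      by (rule half_null[OF P Wm Um eq[OF q, symmetric] calculation])
    ultimately show ?thesis by eventually_elim auto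
  next
    case False
    have "AE \<omega> in M. \<not> (U \<omega> \<le> q \<and> q < W \<omega>)"
      by (rule AE_I'[OF N]) (use False in auto)
    moreover have "AE \<omega> in M. \<not> (W \<omega> \<le> q \<and> q < U \<omega>)"
      by (rule half_null[OF P Um Wm eq[OF q] calculation])
    ultimately show ?thesis by eventually_elim auto
  qed
  have "AE \<omega> in M. \<forall>q\<in>\<rat> \<inter> {0<..<1}. \<not> (U \<omega> \<le> q \<and> q < W \<omega>) \<and> \<not> (W \<omega> \<le> q \<and> q < U \<omega>)"
    by (rule AE_ball_countable') (use each countable_rat in auto)
  moreover have "AE \<omega> in M. \<omega> \<in> space M" by simp
  ultimately show ?thesis
  proof eventually_elim
    case (elim \<omega>)
    show "U \<omega> = W \<omega>"
    proof (rule ccontr)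
      assume "U \<omega> \<noteq> W \<omega>"
      then consider "U \<omega> < W \<omega>" | "W \<omega> < U \<omega>" by linarith
      then show False
      proof cases
        case 1
        then obtain q where q: "q \<in> \<rat>" "U \<omega> < q" "q < W \<omega>" using Rats_dense_in_real by blast
        have "0 \<le> U \<omega>" "U \<omega> \<le> 1" "0 \<le> W \<omega>" "W \<omega> \<le> 1" using elim(2) U01[of \<omega>] W01[of \<omega>] by auto
        then have "q \<in> \<rat> \<inter> {0<..<1}" using q by auto
        then show False using elim(1) q by force
      next
        case 2
        then obtain q where q: "q \<in> \<rat>" "W \<omega> < q" "q < U \<omega>" using Rats_dense_in_real by blast
        have "0 \<le> U \<omega>" "U \<omega> \<le> 1" "0 \<le> W \<omega>" "W \<omega> \<le> 1" using elim(2) U01[of \<omega>] W01[of \<omega>] by auto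
        then have "q \<in> \<rat> \<inter> {0<..<1}" using q by auto
        then show False using elim(1) q by force
      qed
    qed
  qed
qed

lemma distr_fun_mono:
  assumes "prob_space M" "continuous_rv M X" "x \<le> y"
  shows "distr_fun M X x \<le> distr_fun M X y"
proof -
  interpret prob_space M by fact
  interpret D: real_distribution "distr M borel X" using assms by (simp add: continuous_rv_def)
  show ?thesis unfolding distr_fun_def using D.cdf_nondecreasing assms(3) by auto
qed

lemma moments:
  assumes P: "prob_space M" and nb: "natural_basis B" and C: "continuous_rv M X"
    and j: "j \<ge> 1"
  shows "(\<integral>\<omega>. B j (distr_fun M X (X \<omega>)) \<partial>M) = 0"
    and "(\<integral>\<omega>. B j (distr_fun M X (X \<omega>)) * B k (distr_fun M X (X \<omega>)) \<partial>M) = (if j = k then 1 else 0)"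
    and "(\<integral>\<omega>. (B j (distr_fun M X (X \<omega>)))\<^sup>2 \<partial>M) = 1"
proof -
  have cb: "correlation_basis B" using nb by (simp add: natural_basis_def regular_basis_def)
  have Bm: "\<And>i. B i \<in> borel_measurable borel"
    using cb by (auto simp: correlation_basis_def sq_integrable01_def)
  have orth: "\<And>i l. (LINT u:{0..1}|lborel. B i u * B l u) = (if i = l then 1 else 0)"
    using cb by (auto simp: correlation_basis_def)
  have B0: "\<And>u. u \<in> {0..1} \<Longrightarrow> B 0 u = 1" using cb by (auto simp: correlation_basis_def)
  have "(\<integral>\<omega>. B j (distr_fun M X (X \<omega>)) \<partial>M) = (LINT u:{0..1}|lborel. B j u)"
    by (rule unif_integral[OF P C Bm])
  also have "\<dots> = (LINT u:{0..1}|lborel. B j u * B 0 u)"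
    by (rule set_lebesgue_integral_cong) (auto simp: B0)
  also have "\<dots> = 0" using orth[of j 0] j by simp
  finally show "(\<integral>\<omega>. B j (distr_fun M X (X \<omega>)) \<partial>M) = 0" .
  have gm: "\<And>i l. (\<lambda>u. B i u * B l u) \<in> borel_measurable borel" using Bm by measurable
  show "(\<integral>\<omega>. B j (distr_fun M X (X \<omega>)) * B k (distr_fun M X (X \<omega>)) \<partial>M) = (if j = k then 1 else 0)"
    using unif_integral[OF P C gm, of j k] orth[of j k] by simp
  show "(\<integral>\<omega>. (B j (distr_fun M X (X \<omega>)))\<^sup>2 \<partial>M) = 1"
    using unif_integral[OF P C gm, of j j] orth[of j j] by (simp add: power2_eq_square)
qed

theorem proposition3:
  fixes M :: "'a measure" and B :: "nat \<Rightarrow> real \<Rightarrow> real" and X Y :: "'a \<Rightarrow> real"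
  assumes "prob_space M"
    and "natural_basis B"
    and "continuous_rv M X" and "continuous_rv M Y"
  shows "(comonotonic M X Y \<longrightarrow>
            (\<forall>j\<ge>1. \<forall>k\<ge>1. basis_corr B M j k X Y = (if j = k then 1 else 0))) \<and>
         (countermonotonic M X Y \<longrightarrow>
            (\<forall>j\<ge>1. \<forall>k\<ge>1. basis_corr B M j k X Y = (-1) ^ j * (if j = k then 1 else 0)))"
proof -
  note P = assms(1) and nb = assms(2) and CX = assms(3) and CY = assms(4)
  interpret prob_space M by fact
  define U where "U = (\<lambda>\<omega>. distr_fun M X (X \<omega>))"
  define V where "V = (\<lambda>\<omega>. distr_fun M Y (Y \<omega>))"
  have Um: "U \<in> borel_measurable M" unfolding U_def by (rule U_meas[OF CX])
  have Vm: "V \<in> borel_measurable M" unfolding V_def by (rule U_meas[OF CY])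
  have cb: "correlation_basis B" using nb by (simp add: natural_basis_def regular_basis_def)
  have Bm: "\<And>i. B i \<in> borel_measurable borel"
    using cb by (auto simp: correlation_basis_def sq_integrable01_def)
  have sym: "\<And>j u. j \<ge> 1 \<Longrightarrow> u \<in> {0..1} \<Longrightarrow> B j (1 - u) = (-1) ^ j * B j u"
    using nb by (auto simp: natural_basis_def)
  have U01: "\<And>\<omega>. 0 \<le> U \<omega> \<and> U \<omega> \<le> 1" unfolding U_def using U_bounds[OF P CX] by blast
  have V01: "\<And>\<omega>. 0 \<le> V \<omega> \<and> V \<omega> \<le> 1" unfolding V_def using U_bounds[OF P CY] by blast
  have EU: "\<And>j. j \<ge> 1 \<Longrightarrow> (\<integral>\<omega>. B j (U \<omega>) \<partial>M) = 0"
    unfolding U_def using moments(1)[OF P nb CX] by blast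
  have EV: "\<And>j. j \<ge> 1 \<Longrightarrow> (\<integral>\<omega>. B j (V \<omega>) \<partial>M) = 0"
    unfolding V_def using moments(1)[OF P nb CY] by blast
  have EUU: "\<And>j k. j \<ge> 1 \<Longrightarrow> (\<integral>\<omega>. B j (U \<omega>) * B k (U \<omega>) \<partial>M) = (if j = k then 1 else 0)"
    unfolding U_def using moments(2)[OF P nb CX] by blast
  have EU2: "\<And>j. j \<ge> 1 \<Longrightarrow> (\<integral>\<omega>. (B j (U \<omega>))\<^sup>2 \<partial>M) = 1"
    unfolding U_def using moments(3)[OF P nb CX] by blast
  have EV2: "\<And>j. j \<ge> 1 \<Longrightarrow> (\<integral>\<omega>. (B j (V \<omega>))\<^sup>2 \<partial>M) = 1"
    unfolding V_def using moments(3)[OF P nb CY] by blast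
  have corr: "basis_corr B M j k X Y = (\<integral>\<omega>. B j (U \<omega>) * B k (V \<omega>) \<partial>M)"
    if "j \<ge> 1" "k \<ge> 1" for j k
    using EU[OF that(1)] EV[OF that(2)] EU2[OF that(1)] EV2[OF that(2)]
    unfolding basis_corr_def pearson_def Let_def U_def V_def by simp
  have UX: "\<And>\<omega>1 \<omega>2. U \<omega>1 < U \<omega>2 \<Longrightarrow> X \<omega>1 < X \<omega>2"
    unfolding U_def using distr_fun_mono[OF P CX] by (meson linorder_not_le)
  have eqU: "\<And>q. 0 < q \<Longrightarrow> q < 1 \<Longrightarrow> measure M {\<omega>\<in>space M. U \<omega> \<le> q} = q"
    unfolding U_def using unif_cdf[OF P CX] by blast
  have eqV: "\<And>q. 0 < q \<Longrightarrow> q < 1 \<Longrightarrow> measure M {\<omega>\<in>space M. V \<omega> \<le> q} = q"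
    unfolding V_def using unif_cdf[OF P CY] by blast
  have eqVlt: "\<And>q. 0 < q \<Longrightarrow> q < 1 \<Longrightarrow> measure M {\<omega>\<in>space M. V \<omega> < q} = q"
    unfolding V_def using unif_lt[OF P CY] by blast
  have VY: "\<And>\<omega>1 \<omega>2. Y \<omega>1 \<le> Y \<omega>2 \<Longrightarrow> V \<omega>1 \<le> V \<omega>2"
    unfolding V_def using distr_fun_mono[OF P CY] by blast
  show ?thesis
  proof (intro conjI impI allI)
    fix j k :: nat assume co: "comonotonic M X Y" and j: "j \<ge> 1" and k: "k \<ge> 1"
    then obtain A where A: "\<forall>(x1,y1)\<in>A. \<forall>(x2,y2)\<in>A. (x1 - x2) * (y1 - y2) \<ge> 0"
      and ae: "AE \<omega> in M. (X \<omega>, Y \<omega>) \<in> A" by (auto simp: comonotonic_def)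
    from ae obtain N where N: "{\<omega>\<in>space M. (X \<omega>, Y \<omega>) \<notin> A} \<subseteq> N" "emeasure M N = 0" "N \<in> sets M"
      by (rule AE_E)
    have Nn: "N \<in> null_sets M" using N by (auto intro: null_setsI)
    have "AE \<omega> in M. U \<omega> = V \<omega>"
    proof (rule ae_eq_of_mono[OF P Um Vm U01 V01 _ Nn])
      show "\<And>q. 0 < q \<Longrightarrow> q < 1 \<Longrightarrow> measure M {\<omega>\<in>space M. U \<omega> \<le> q} = measure M {\<omega>\<in>space M. V \<omega> \<le> q}"
        using eqU eqV by simp
    next
      fix \<omega>1 \<omega>2 assume w: "\<omega>1 \<in> space M - N" "\<omega>2 \<in> space M - N" "U \<omega>1 < U \<omega>2"
      have "(X \<omega>1, Y \<omega>1) \<in> A" "(X \<omega>2, Y \<omega>2) \<in> A" using w N(1) by auto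
      then have "(X \<omega>1 - X \<omega>2) * (Y \<omega>1 - Y \<omega>2) \<ge> 0" using A by fast
      moreover have "X \<omega>1 - X \<omega>2 < 0" using UX[OF w(3)] by simp
      ultimately have "Y \<omega>1 - Y \<omega>2 \<le> 0" by (simp add: zero_le_mult_iff)
      then show "V \<omega>1 \<le> V \<omega>2" using VY by simp
    qed
    then have "(\<integral>\<omega>. B j (U \<omega>) * B k (V \<omega>) \<partial>M) = (\<integral>\<omega>. B j (U \<omega>) * B k (U \<omega>) \<partial>M)"
      by (intro integral_cong_AE) (use Um Vm Bm in \<open>measurable, auto\<close>)
    then show "basis_corr B M j k X Y = (if j = k then 1 else 0)"
      using corr[OF j k] EUU[OF j] by simp
  next
    fix j k :: nat assume co: "countermonotonic M X Y" and j: "j \<ge> 1" and k: "k \<ge> 1"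
    then obtain A where A: "\<forall>(x1,y1)\<in>A. \<forall>(x2,y2)\<in>A. (x1 - x2) * (y1 - y2) \<le> 0"
      and ae: "AE \<omega> in M. (X \<omega>, Y \<omega>) \<in> A" by (auto simp: countermonotonic_def)
    from ae obtain N where N: "{\<omega>\<in>space M. (X \<omega>, Y \<omega>) \<notin> A} \<subseteq> N" "emeasure M N = 0" "N \<in> sets M"
      by (rule AE_E)
    have Nn: "N \<in> null_sets M" using N by (auto intro: null_setsI)
    define W where "W = (\<lambda>\<omega>. 1 - V \<omega>)"
    have Wm: "W \<in> borel_measurable M" unfolding W_def using Vm by measurable
    have "AE \<omega> in M. U \<omega> = W \<omega>"
    proof (rule ae_eq_of_mono[OF P Um Wm U01 _ _ Nn])
      show "\<And>\<omega>. \<omega> \<in> space M \<Longrightarrow> 0 \<le> W \<omega> \<and> W \<omega> \<le> 1" unfolding W_def using V01 by auto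
    next
      fix q :: real assume q: "0 < q" "q < 1"
      have "{\<omega>\<in>space M. W \<omega> \<le> q} = space M - {\<omega>\<in>space M. V \<omega> < 1 - q}"
        unfolding W_def by auto
      moreover have "{\<omega>\<in>space M. V \<omega> < 1 - q} \<in> events" using Vm by measurable
      ultimately have "measure M {\<omega>\<in>space M. W \<omega> \<le> q} = 1 - (1 - q)"
        using prob_compl eqVlt[of "1 - q"] q by simp
      then show "measure M {\<omega>\<in>space M. U \<omega> \<le> q} = measure M {\<omega>\<in>space M. W \<omega> \<le> q}"
        using eqU[OF q] by simp
    next
      fix \<omega>1 \<omega>2 assume w: "\<omega>1 \<in> space M - N" "\<omega>2 \<in> space M - N" "U \<omega>1 < U \<omega>2"
      have "(X \<omega>1, Y \<omega>1) \<in> A" "(X \<omega>2, Y \<omega>2) \<in> A" using w N(1) by auto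
      then have "(X \<omega>1 - X \<omega>2) * (Y \<omega>1 - Y \<omega>2) \<le> 0" using A by fast
      moreover have "X \<omega>1 - X \<omega>2 < 0" using UX[OF w(3)] by simp
      ultimately have "Y \<omega>2 \<le> Y \<omega>1" by (simp add: mult_le_0_iff)
      then show "W \<omega>1 \<le> W \<omega>2" using VY unfolding W_def by (simp add: VY)
    qed
    then have "AE \<omega> in M. B k (V \<omega>) = (-1) ^ k * B k (U \<omega>)"
    proof eventually_elim
      case (elim \<omega>)
      then have "V \<omega> = 1 - U \<omega>" by (simp add: W_def)
      then show ?case using sym[OF k, of "U \<omega>"] U01[of \<omega>] by simp
    qed
    then have "(\<integral>\<omega>. B j (U \<omega>) * B k (V \<omega>) \<partial>M) = (\<integral>\<omega>. (-1) ^ k * (B j (U \<omega>) * B k (U \<omega>)) \<partial>M)"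
      by (intro integral_cong_AE) (use Um Vm Bm in \<open>measurable, auto\<close>)
    also have "\<dots> = (-1) ^ k * (\<integral>\<omega>. B j (U \<omega>) * B k (U \<omega>) \<partial>M)" by simp
    finally show "basis_corr B M j k X Y = (-1) ^ j * (if j = k then 1 else 0)"
      using corr[OF j k] EUU[OF j, of k] by simp
  qed
qed

end
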